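(* Let $(\mathbf{x},\mathbf{F})$ be an LP seed of rank $n$ with $\hat F_k=F_k$ for all $k\in[1,n]$. Then for all $i\ne k$, $F_i$ is not equal to a unit multiple of $F_k$; consequently any two distinct exchange polynomials $F_i,F_k$ ($i\neq k$) are coprime in $R[x_1,\dots,x_n]$.
   Context: $R$ is a unique factorization domain containing $\mathbb{Z}$ and $\mathcal{F}$ is the field of rational functions in $n$ variables over $\mathrm{Frac}(R)$. An LP seed of rank $n$ is a pair $(\mathbf{x},\mathbf{F})$ where $\mathbf{x}=\{x_1,\dots,x_n\}$ is a transcendence basis of $\mathcal{F}$ over $\mathrm{Frac}(R)$ and $\mathbf{F}=\{F_1,\dots,F_n\}$ are irreducible polynomials in $R[x_1,\dots,x_n]$ with $x_j\nmid F_i$ for all $i,j$ and $F_i$ not involving $x_i$. The exchange Laurent polynomial is $\hat F_j=F_j/\prod_{k\neq j}x_k^{a_k}$, with $a_k\in\mathbb{Z}_{\ge0}$ maximal such that $F_k^{a_k}$ divides $F_j|_{x_k\leftarrow F_k/x'_k}$ in $R[x_1,\dots,x_{k-1},(x'_k)^{-1},x_{k+1},\dots,x_n]$ ($x'_k$ a new indeterminate). *)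

theory Defs
  imports "HOL-Library.Poly_Mapping" "HOL-Computational_Algebra.Factorial_Ring"
begin

(* Multivariate polynomials over R: finitely supported maps from monomials
 (exponent vectors nat \<Rightarrow>0 nat) to coefficients. Variable x_(i+1) of the paper is Var i. *)
type_synonym 'a mpoly = "(nat \<Rightarrow>\<^sub>0 nat) \<Rightarrow>\<^sub>0 'a"

definition Var :: "nat \<Rightarrow> 'a::comm_semiring_1 mpoly" where
  "Var i = Poly_Mapping.single (Poly_Mapping.single i 1) 1"

definition Const :: "'a::comm_semiring_1 \<Rightarrow> 'a mpoly" where
  "Const c = Poly_Mapping.single 0 c"

definition vars :: "'a::zero mpoly \<Rightarrow> nat set" where
  "vars p = \<Union> (Poly_Mapping.keys ` Poly_Mapping.keys p)"

definition in_ring :: "nat \<Rightarrow> 'a::zero mpoly \<Rightarrow> bool" where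
  "in_ring n p \<longleftrightarrow> vars p \<subseteq> {..<n}"

definition dvd_in :: "nat \<Rightarrow> 'a::comm_semiring_1 mpoly \<Rightarrow> 'a mpoly \<Rightarrow> bool" where
  "dvd_in n a b \<longleftrightarrow> (\<exists>c. in_ring n c \<and> b = a * c)"

definition unit_in :: "nat \<Rightarrow> 'a::comm_semiring_1 mpoly \<Rightarrow> bool" where
  "unit_in n u \<longleftrightarrow> in_ring n u \<and> dvd_in n u 1"

definition irreducible_in :: "nat \<Rightarrow> 'a::comm_semiring_1 mpoly \<Rightarrow> bool" where
  "irreducible_in n p \<longleftrightarrow> in_ring n p \<and> p \<noteq> 0 \<and> \<not> unit_in n p \<and>
     (\<forall>a b. in_ring n a \<longrightarrow> in_ring n b \<longrightarrow> p = a * b \<longrightarrow> unit_in n a \<or> unit_in n b)"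

definition coprime_in :: "nat \<Rightarrow> 'a::comm_semiring_1 mpoly \<Rightarrow> 'a mpoly \<Rightarrow> bool" where
  "coprime_in n p q \<longleftrightarrow>
     (\<forall>d. in_ring n d \<longrightarrow> dvd_in n d p \<longrightarrow> dvd_in n d q \<longrightarrow> unit_in n d)"

definition subst :: "nat \<Rightarrow> 'a::comm_semiring_1 mpoly \<Rightarrow> 'a mpoly \<Rightarrow> 'a mpoly" where
  "subst k q p = (\<Sum>m\<in>Poly_Mapping.keys p. Const (Poly_Mapping.lookup p m) *
      (\<Prod>v\<in>Poly_Mapping.keys (m::nat \<Rightarrow>\<^sub>0 nat). (if v = k then q else Var v) ^ Poly_Mapping.lookup m v))"

(* LP seed of rank n (cluster variables = the polynomial variables 0..n-1). *)
definition LP_seed :: "nat \<Rightarrow> (nat \<Rightarrow> 'a::comm_semiring_1 mpoly) \<Rightarrow> bool" where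
  "LP_seed n F \<longleftrightarrow> (\<forall>i<n. irreducible_in n (F i) \<and>
      (\<forall>j<n. \<not> dvd_in n (Var j) (F i)) \<and> i \<notin> vars (F i))"

(* Exponent a_k in the definition of the exchange Laurent polynomial hat F_j:
 the maximal a with F_k^a dividing F_j|_{x_k <- F_k/x'_k} in
 R[x_1..x_{k-1},(x'_k)^{-1},x_{k+1}..x_n]; the variable slot k is reused for (x'_k)^{-1},
 so F_k/x'_k becomes F_k * Var k. *)
definition exch_exp :: "nat \<Rightarrow> (nat \<Rightarrow> 'a::comm_semiring_1 mpoly) \<Rightarrow> nat \<Rightarrow> nat \<Rightarrow> nat" where
  "exch_exp n F j k = (GREATEST a. dvd_in n (F k ^ a) (subst k (F k * Var k) (F j)))"

(* Denominator monomial prod_{k<>j} x_k^{a_k}; hat F_j = F_j / exch_denom n F j. *)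
definition exch_denom :: "nat \<Rightarrow> (nat \<Rightarrow> 'a::comm_semiring_1 mpoly) \<Rightarrow> nat \<Rightarrow> 'a mpoly" where
  "exch_denom n F j = (\<Prod>k\<in>{..<n} - {j}. Var k ^ exch_exp n F j k)"

end

theory Submission
  imports Defs
begin

definition mdeg :: "(nat \<Rightarrow>\<^sub>0 nat) \<Rightarrow> nat" where
  "mdeg m = (\<Sum>v\<in>Poly_Mapping.keys m. Poly_Mapping.lookup m v)"

lemma mdeg_add: "mdeg (a + b) = mdeg a + mdeg b"
  unfolding mdeg_def
  by (rule setsum_keys_plus_distrib[where f="\<lambda>k x. x"]) auto

lemma mdeg_single: "mdeg (Poly_Mapping.single v e) = e"
  unfolding mdeg_def by simp

lemma mdeg_0_iff: "mdeg m = 0 \<longleftrightarrow> m = 0"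
proof
  assume "mdeg m = 0"
  then have "\<forall>v\<in>Poly_Mapping.keys m. Poly_Mapping.lookup m v = 0"
    unfolding mdeg_def by simp
  then show "m = 0" by (intro poly_mapping_eqI) (auto simp: in_keys_iff)
qed (simp add: mdeg_def)

definition tdeg :: "'a::zero mpoly \<Rightarrow> nat" where
  "tdeg p = Max (insert 0 (mdeg ` Poly_Mapping.keys p))"

lemma tdeg_ge: "m \<in> Poly_Mapping.keys p \<Longrightarrow> mdeg m \<le> tdeg p"
  unfolding tdeg_def by (rule Max_ge) auto

lemma tdeg_attained:
  assumes "p \<noteq> 0" shows "\<exists>m\<in>Poly_Mapping.keys p. mdeg m = tdeg p"
proof -
  have ne: "Poly_Mapping.keys p \<noteq> {}" using assms by simp
  have "tdeg p \<in> insert 0 (mdeg ` Poly_Mapping.keys p)"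
    unfolding tdeg_def by (rule Max_in) auto
  then show ?thesis
  proof
    assume "tdeg p = 0"
    with ne obtain m where "m \<in> Poly_Mapping.keys p" by blast
    with tdeg_ge[OF this] \<open>tdeg p = 0\<close> show ?thesis by auto
  qed auto
qed

lemma pm_expand: "p = (\<Sum>a\<in>Poly_Mapping.keys p. Poly_Mapping.single a (Poly_Mapping.lookup p a))"
proof (rule poly_mapping_eqI)
  fix k
  show "Poly_Mapping.lookup p k = Poly_Mapping.lookup (\<Sum>a\<in>Poly_Mapping.keys p. Poly_Mapping.single a (Poly_Mapping.lookup p a)) k"
    by (cases "k \<in> Poly_Mapping.keys p")
       (auto simp: lookup_sum lookup_single when_def in_keys_iff)
qed

lemma lookup_mult_keys:
  fixes f g :: "'a::comm_semiring_1 mpoly"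
  shows "Poly_Mapping.lookup (f * g) k =
    (\<Sum>a\<in>Poly_Mapping.keys f. \<Sum>b\<in>Poly_Mapping.keys g.
        if a + b = k then Poly_Mapping.lookup f a * Poly_Mapping.lookup g b else 0)"
proof -
  have "f * g = (\<Sum>a\<in>Poly_Mapping.keys f. Poly_Mapping.single a (Poly_Mapping.lookup f a)) *
                (\<Sum>b\<in>Poly_Mapping.keys g. Poly_Mapping.single b (Poly_Mapping.lookup g b))"
    using pm_expand[of f] pm_expand[of g] by simp
  also have "\<dots> = (\<Sum>a\<in>Poly_Mapping.keys f. \<Sum>b\<in>Poly_Mapping.keys g.
        Poly_Mapping.single (a + b) (Poly_Mapping.lookup f a * Poly_Mapping.lookup g b))"
    by (simp add: sum_product mult_single)
  finally show ?thesis
    by (simp add: lookup_sum lookup_single when_def eq_commute)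
qed

lemma tdeg_mult:
  fixes f g :: "'a::idom mpoly"
  assumes f: "f \<noteq> 0" and g: "g \<noteq> 0"
  shows "tdeg f + tdeg g \<le> tdeg (f * g)"
proof -
  define F' where "F' = {a\<in>Poly_Mapping.keys f. mdeg a = tdeg f}"
  define G' where "G' = {b\<in>Poly_Mapping.keys g. mdeg b = tdeg g}"
  have fF: "finite F'" "F' \<noteq> {}" using tdeg_attained[OF f] by (auto simp: F'_def)
  have fG: "finite G'" "G' \<noteq> {}" using tdeg_attained[OF g] by (auto simp: G'_def)
  define a0 where "a0 = Max F'"
  define b0 where "b0 = Max G'"
  have a0: "a0 \<in> F'" using fF unfolding a0_def by (rule Max_in)
  have b0: "b0 \<in> G'" using fG unfolding b0_def by (rule Max_in)
  have key: "a = a0 \<and> b = b0" if a: "a \<in> Poly_Mapping.keys f" and b: "b \<in> Poly_Mapping.keys g"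
    and ab: "a + b = a0 + b0" for a b
  proof -
    have "mdeg a + mdeg b = tdeg f + tdeg g"
    proof -
      have "mdeg a + mdeg b = mdeg (a0 + b0)" using ab by (simp add: mdeg_add[symmetric])
      also have "\<dots> = tdeg f + tdeg g" using a0 b0 by (simp add: mdeg_add F'_def G'_def)
      finally show ?thesis .
    qed
    moreover have "mdeg a \<le> tdeg f" "mdeg b \<le> tdeg g" using a b by (auto intro: tdeg_ge)
    ultimately have "a \<in> F'" "b \<in> G'" using a b by (auto simp: F'_def G'_def)
    then have le: "a \<le> a0" "b \<le> b0" using fF fG by (auto simp: a0_def b0_def)
    have "a = a0"
    proof (rule ccontr)
      assume "a \<noteq> a0"
      with le have "a < a0" by simp
      then have "a + b < a0 + b0" using le(2) by (rule add_less_le_mono)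
      with ab show False by simp
    qed
    with ab show ?thesis by simp
  qed
  have "Poly_Mapping.lookup (f * g) (a0 + b0) =
      (\<Sum>a\<in>Poly_Mapping.keys f. \<Sum>b\<in>Poly_Mapping.keys g.
        if a + b = a0 + b0 then Poly_Mapping.lookup f a * Poly_Mapping.lookup g b else 0)"
    by (rule lookup_mult_keys)
  also have "\<dots> = (\<Sum>a\<in>Poly_Mapping.keys f. \<Sum>b\<in>Poly_Mapping.keys g.
        if a = a0 \<and> b = b0 then Poly_Mapping.lookup f a * Poly_Mapping.lookup g b else 0)"
    by (intro sum.cong refl, use key in fastforce)
  also have "\<dots> = (\<Sum>a\<in>Poly_Mapping.keys f.
        if a = a0 then Poly_Mapping.lookup f a * Poly_Mapping.lookup g b0 else 0)"
  proof (intro sum.cong refl)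
    fix a assume "a \<in> Poly_Mapping.keys f"
    show "(\<Sum>b\<in>Poly_Mapping.keys g.
        if a = a0 \<and> b = b0 then Poly_Mapping.lookup f a * Poly_Mapping.lookup g b else 0) =
        (if a = a0 then Poly_Mapping.lookup f a * Poly_Mapping.lookup g b0 else 0)"
    proof (cases "a = a0")
      case True
      have "b0 \<in> Poly_Mapping.keys g" using b0 by (simp add: G'_def)
      then show ?thesis using True by (simp add: sum.delta')
    qed simp
  qed
  also have "\<dots> = Poly_Mapping.lookup f a0 * Poly_Mapping.lookup g b0"
    using a0 by (auto simp: F'_def)
  finally have "Poly_Mapping.lookup (f * g) (a0 + b0) \<noteq> 0"
    using a0 b0 by (auto simp: F'_def G'_def in_keys_iff)
  then have "a0 + b0 \<in> Poly_Mapping.keys (f * g)" by (simp add: in_keys_iff)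
  then have "mdeg (a0 + b0) \<le> tdeg (f * g)" by (rule tdeg_ge)
  moreover have "mdeg (a0 + b0) = tdeg f + tdeg g"
    using a0 b0 by (simp add: mdeg_add F'_def G'_def)
  ultimately show ?thesis by simp
qed

lemma tdeg_power:
  fixes p :: "'a::idom mpoly"
  assumes "p \<noteq> 0" shows "n * tdeg p \<le> tdeg (p ^ n)"
proof (induction n)
  case (Suc n)
  have "tdeg p + tdeg (p ^ n) \<le> tdeg (p * p ^ n)"
    using assms by (intro tdeg_mult) auto
  with Suc show ?case by simp
qed simp

lemma tdeg_one: "tdeg (1::'a::comm_semiring_1 mpoly) = 0"
  unfolding tdeg_def by (simp add: mdeg_def)

lemma tdeg0_Const:
  assumes "tdeg p = 0" shows "p = Const (Poly_Mapping.lookup p 0)"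
proof (rule poly_mapping_eqI)
  fix k
  show "Poly_Mapping.lookup p k = Poly_Mapping.lookup (Const (Poly_Mapping.lookup p 0)) k"
  proof (cases "k \<in> Poly_Mapping.keys p")
    case True
    then have "mdeg k = 0" using tdeg_ge[OF True] assms by simp
    then have "k = 0" by (simp add: mdeg_0_iff)
    then show ?thesis by (simp add: Const_def)
  next
    case False
    then show ?thesis by (auto simp: Const_def lookup_single when_def in_keys_iff)
  qed
qed

lemma Const_mult: "Const c * Const d = Const (c * d)"
  by (simp add: Const_def mult_single)

lemma Const_one: "Const 1 = 1"
  by (simp add: Const_def)

lemma Const_power: "Const c ^ n = Const (c ^ n)"
  by (induction n) (simp_all add: Const_one Const_mult)

lemma lookup_Const_mult:
  fixes q :: "'a::comm_semiring_1 mpoly"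
  shows "Poly_Mapping.lookup (Const c * q) m = c * Poly_Mapping.lookup q m"
proof (cases "c = 0")
  case True then show ?thesis by (simp add: Const_def)
next
  case False
  have "Poly_Mapping.lookup (Const c * q) m = (\<Sum>b\<in>Poly_Mapping.keys q.
        if b = m then c * Poly_Mapping.lookup q b else 0)"
    using False by (simp add: lookup_mult_keys Const_def)
  also have "\<dots> = c * Poly_Mapping.lookup q m"
    by (cases "m \<in> Poly_Mapping.keys q") (auto simp: sum.delta' in_keys_iff)
  finally show ?thesis .
qed

lemma keys_Const_mult: "Poly_Mapping.keys (Const c * (q::'a::comm_semiring_1 mpoly)) \<subseteq> Poly_Mapping.keys q"
  by (auto simp: in_keys_iff lookup_Const_mult)

lemma vars_Const_mult: "vars (Const c * (q::'a::comm_semiring_1 mpoly)) \<subseteq> vars q"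
  unfolding vars_def using keys_Const_mult by blast

lemma in_ring_Const: "in_ring n (Const c)"
  by (simp add: in_ring_def vars_def Const_def)

lemma unit_in_Const:
  assumes "(c::'a::comm_semiring_1) dvd 1" shows "unit_in n (Const c)"
proof -
  from assms obtain d where "1 = c * d" by (auto elim: dvdE)
  then have "1 = Const c * Const d" by (simp add: Const_mult Const_one)
  then show ?thesis unfolding unit_in_def dvd_in_def using in_ring_Const by blast
qed

lemma unit_in_Const_ex:
  fixes u :: "'a::idom mpoly"
  assumes "unit_in n u" shows "\<exists>c. u = Const c \<and> c dvd 1"
proof -
  from assms obtain v where v: "1 = u * v" by (auto simp: unit_in_def dvd_in_def)
  then have nz: "u \<noteq> 0" "v \<noteq> 0" by auto
  have "tdeg u + tdeg v \<le> 0" using tdeg_mult[OF nz] v tdeg_one by metis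
  then have "tdeg u = 0" "tdeg v = 0" by auto
  then have eq: "u = Const (Poly_Mapping.lookup u 0)" "v = Const (Poly_Mapping.lookup v 0)"
    by (auto intro: tdeg0_Const)
  then have "1 = Const (Poly_Mapping.lookup u 0 * Poly_Mapping.lookup v 0)"
    using v Const_mult by metis
  then have "Poly_Mapping.lookup u 0 * Poly_Mapping.lookup v 0 = 1"
    by (metis Const_def Const_one inj_single inj_eq)
  then have "Poly_Mapping.lookup u 0 dvd 1" by (metis dvd_triv_left)
  with eq show ?thesis by blast
qed

lemma finite_pow_dvd:
  fixes p :: "'a::{factorial_semiring, idom} mpoly"
  assumes p: "p \<noteq> 0" and nu: "\<not> unit_in n p" and Y: "Y \<noteq> 0"
  shows "finite {a. \<exists>C. Y = p ^ a * C}"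
proof (cases "tdeg p = 0")
  case False
  have "a \<le> tdeg Y" if "Y = p ^ a * C" for a C
  proof -
    have nz: "p ^ a \<noteq> 0" "C \<noteq> 0" using that Y p by auto
    have "a * tdeg p \<le> tdeg (p ^ a)" using p by (rule tdeg_power)
    also have "\<dots> \<le> tdeg Y" using tdeg_mult[OF nz] that by simp
    finally have "a * tdeg p \<le> tdeg Y" .
    moreover have "a * 1 \<le> a * tdeg p" using False by (intro mult_le_mono2) simp
    ultimately show ?thesis by linarith
  qed
  then show ?thesis unfolding finite_nat_set_iff_bounded_le by blast
next
  case True
  define c where "c = Poly_Mapping.lookup p 0"
  have pc: "p = Const c" using tdeg0_Const[OF True] c_def by simp
  have c0: "c \<noteq> 0" using p pc by (auto simp: Const_def)
  have cnu: "\<not> c dvd 1" using nu pc unit_in_Const by blast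
  obtain m where m: "m \<in> Poly_Mapping.keys Y" using Y by (metis all_not_in_conv keys_eq_empty)
  have "{a. \<exists>C. Y = p ^ a * C} \<subseteq> {a. c ^ a dvd Poly_Mapping.lookup Y m}"
  proof
    fix a assume "a \<in> {a. \<exists>C. Y = p ^ a * C}"
    then obtain C where "Y = Const (c ^ a) * C" by (auto simp: pc Const_power)
    then have "Poly_Mapping.lookup Y m = c ^ a * Poly_Mapping.lookup C m"
      by (simp add: lookup_Const_mult)
    then show "a \<in> {a. c ^ a dvd Poly_Mapping.lookup Y m}" by auto
  qed
  moreover have "finite {a. c ^ a dvd Poly_Mapping.lookup Y m}"
    using m cnu by (intro finite_divisor_powers) (auto simp: in_keys_iff)
  ultimately show ?thesis by (rule finite_subset)
qed

lemma Var_power: "(Var v :: 'a::comm_semiring_1 mpoly) ^ e = Poly_Mapping.single (Poly_Mapping.single v e) 1"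
proof (induction e)
  case 0 then show ?case by simp
next
  case (Suc e)
  have "(Var v :: 'a mpoly) ^ Suc e = Var v * Var v ^ e" by simp
  also have "\<dots> = Var v * Poly_Mapping.single (Poly_Mapping.single v e) 1"
    using Suc by simp
  also have "\<dots> = Poly_Mapping.single (Poly_Mapping.single v 1 + Poly_Mapping.single v e) 1"
    by (simp add: Var_def mult_single)
  also have "\<dots> = Poly_Mapping.single (Poly_Mapping.single v (Suc e)) 1"
    by (simp add: single_add[symmetric])
  finally show ?case .
qed

lemma prod_single:
  assumes "finite S"
  shows "(\<Prod>v\<in>S. Poly_Mapping.single (g v) (1::'a::comm_semiring_1)) = Poly_Mapping.single (\<Sum>v\<in>S. g v) 1"
  using assms by (induction S rule: finite_induct) (simp_all add: mult_single)

lemma subst_id: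
  fixes P :: "'a::comm_semiring_1 mpoly"
  assumes "k \<notin> vars P"
  shows "subst k q P = P"
proof -
  have "subst k q P = (\<Sum>m\<in>Poly_Mapping.keys P. Const (Poly_Mapping.lookup P m) *
      (\<Prod>v\<in>Poly_Mapping.keys m. Var v ^ Poly_Mapping.lookup m v))"
    unfolding subst_def
  proof (intro sum.cong refl arg_cong2[where f="(*)"] prod.cong)
    fix m v assume "m \<in> Poly_Mapping.keys P" "v \<in> Poly_Mapping.keys m"
    then have "v \<noteq> k" using assms by (auto simp: vars_def)
    then show "(if v = k then q else Var v) ^ Poly_Mapping.lookup m v = Var v ^ Poly_Mapping.lookup m v"
      by simp
  qed
  also have "\<dots> = (\<Sum>m\<in>Poly_Mapping.keys P. Poly_Mapping.single m (Poly_Mapping.lookup P m))"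
  proof (intro sum.cong refl)
    fix m :: "nat \<Rightarrow>\<^sub>0 nat"
    have "(\<Prod>v\<in>Poly_Mapping.keys m. (Var v :: 'a mpoly) ^ Poly_Mapping.lookup m v)
        = Poly_Mapping.single (\<Sum>v\<in>Poly_Mapping.keys m. Poly_Mapping.single v (Poly_Mapping.lookup m v)) 1"
      by (simp add: Var_power prod_single)
    also have "\<dots> = Poly_Mapping.single m 1" using pm_expand[of m] by simp
    finally show "Const (Poly_Mapping.lookup P m) *
      (\<Prod>v\<in>Poly_Mapping.keys m. Var v ^ Poly_Mapping.lookup m v) =
      Poly_Mapping.single m (Poly_Mapping.lookup P m)"
      by (simp add: Const_def mult_single)
  qed
  also have "\<dots> = P" using pm_expand[of P] by simp
  finally show ?thesis .
qed

lemma tdeg_single1: "tdeg (Poly_Mapping.single m (1::'a::comm_semiring_1)) = mdeg m"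
  unfolding tdeg_def by simp

lemma part1:
  fixes F :: "nat \<Rightarrow> 'a::{factorial_semiring, idom, ring_char_0} mpoly" and n :: nat
  assumes seed: "LP_seed n F"
    and den: "\<forall>k<n. exch_denom n F k = 1"
    and ik: "i < n" "k < n" "i \<noteq> k"
    and u: "unit_in n u" and Fi: "F i = u * F k"
  shows False
proof -
  have irri: "irreducible_in n (F i)" and irrk: "irreducible_in n (F k)"
    and kk: "k \<notin> vars (F k)"
    using seed ik unfolding LP_seed_def by auto
  obtain c where uc: "u = Const c" using unit_in_Const_ex[OF u] by blast
  have "vars (F i) \<subseteq> vars (F k)" using Fi uc vars_Const_mult by metis
  with kk have "k \<notin> vars (F i)" by blast
  then have sub: "subst k (F k * Var k) (F i) = F i" by (rule subst_id)
  let ?P = "\<lambda>a. dvd_in n (F k ^ a) (subst k (F k * Var k) (F i))"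
  have P1: "?P 1" unfolding sub dvd_in_def using Fi uc in_ring_Const
    by (metis power_one_right mult.commute)
  have Fi0: "F i \<noteq> 0" and Fk0: "F k \<noteq> 0" and Fknu: "\<not> unit_in n (F k)"
    using irri irrk by (auto simp: irreducible_in_def)
  have "{a. ?P a} \<subseteq> {a. \<exists>C. F i = F k ^ a * C}"
    unfolding sub dvd_in_def by blast
  moreover have "finite {a. \<exists>C. F i = F k ^ a * C}"
    using Fk0 Fknu Fi0 by (rule finite_pow_dvd)
  ultimately have "finite {a. ?P a}" by (rule finite_subset)
  then obtain b where b: "\<forall>a\<in>{a. ?P a}. a \<le> b" unfolding finite_nat_set_iff_bounded_le by blast
  have e1: "1 \<le> exch_exp n F i k"
    unfolding exch_exp_def by (rule Greatest_le_nat[where b=b]) (use P1 b in auto)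
  define e where "e = exch_exp n F i k"
  have kin: "k \<in> {..<n} - {i}" using ik by auto
  have "1 = exch_denom n F i" using den ik by simp
  also have "\<dots> = Var k ^ e * (\<Prod>k'\<in>({..<n} - {i}) - {k}. Var k' ^ exch_exp n F i k')"
    unfolding exch_denom_def e_def using kin by (simp add: prod.remove)
  finally have one: "1 = Var k ^ e * (\<Prod>k'\<in>({..<n} - {i}) - {k}. (Var k' :: 'a mpoly) ^ exch_exp n F i k')" .
  then have nz: "(Var k :: 'a mpoly) ^ e \<noteq> 0" "(\<Prod>k'\<in>({..<n} - {i}) - {k}. (Var k' :: 'a mpoly) ^ exch_exp n F i k') \<noteq> 0"
    by (metis mult_zero_left zero_neq_one, metis mult_zero_right zero_neq_one)
  have "tdeg ((Var k :: 'a mpoly) ^ e) + tdeg (\<Prod>k'\<in>({..<n} - {i}) - {k}. (Var k' :: 'a mpoly) ^ exch_exp n F i k') \<le> tdeg (1::'a mpoly)"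
    using tdeg_mult[OF nz] one by simp
  then have "tdeg ((Var k :: 'a mpoly) ^ e) = 0" by (simp add: tdeg_one)
  moreover have "tdeg ((Var k :: 'a mpoly) ^ e) = e" by (simp add: Var_power tdeg_single1 mdeg_single)
  ultimately show False using e1 e_def by simp
qed

theorem proposition4p9:
  fixes F :: "nat \<Rightarrow> 'a::{factorial_semiring, idom, ring_char_0} mpoly" and n :: nat
  assumes "LP_seed n F"
    and "\<forall>k<n. exch_denom n F k = 1"
  shows "\<forall>i<n. \<forall>k<n. i \<noteq> k \<longrightarrow>
           \<not> (\<exists>u. unit_in n u \<and> F i = u * F k) \<and> coprime_in n (F i) (F k)"
proof (intro allI impI conjI)
  fix i k assume ik: "i < n" "k < n" "i \<noteq> k"
  show "\<not> (\<exists>u. unit_in n u \<and> F i = u * F k)"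
    using part1[OF assms ik] by blast
  show "coprime_in n (F i) (F k)"
    unfolding coprime_in_def
  proof (intro allI impI)
    fix d assume d: "in_ring n d" and di: "dvd_in n d (F i)" and dk: "dvd_in n d (F k)"
    show "unit_in n d"
    proof (rule ccontr)
      assume nd: "\<not> unit_in n d"
      from di obtain c1 where c1: "in_ring n c1" "F i = d * c1" by (auto simp: dvd_in_def)
      from dk obtain c2 where c2: "in_ring n c2" "F k = d * c2" by (auto simp: dvd_in_def)
      have irri: "irreducible_in n (F i)" and irrk: "irreducible_in n (F k)"
        using assms(1) ik unfolding LP_seed_def by auto
      have "unit_in n c1" using irri d c1 nd unfolding irreducible_in_def by blast
      then obtain c where c: "c1 = Const c" "c dvd 1" using unit_in_Const_ex by blast
      have "unit_in n c2" using irrk d c2 nd unfolding irreducible_in_def by blast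
      then obtain e where e: "c2 = Const e" "e dvd 1" using unit_in_Const_ex by blast
      from e(2) obtain e' where e': "1 = e * e'" by (auto elim: dvdE)
      have "e' dvd 1" using e' by (metis dvd_triv_right)
      then have u: "e' * c dvd 1" using c(2) by (simp add: unit_prod)
      have "e * (e' * c) = c" using e' by (simp add: mult.assoc[symmetric])
      then have "Const c = Const e * Const (e' * c)" by (simp only: Const_mult)
      then have "F i = d * Const e * Const (e' * c)"
        using c1 c by (simp add: mult.assoc)
      also have "\<dots> = Const (e' * c) * F k" using c2 e by (simp add: mult.commute)
      finally have "F i = Const (e' * c) * F k" .
      with unit_in_Const[OF u] show False using part1[OF assms ik] by blast
    qed
  qed
qed

end
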